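(* Let $\lambda>0$, $\gamma>0$, $\Delta>0$, and let $\{\Omega_1,\dots,\Omega_N\}$ be a finite $\Delta$-partition of $\Omega$. Let $$B_p^\gamma(r)=\{x\in B_p(r):\|x(\xi)\|\le\gamma\ \forall\xi\in\Omega\}$$ and $$B_p^{\gamma,\Delta}(r)=\{x\in B_p^\gamma(r):\ x\text{ is constant on each }\Omega_i,\ i=1,\dots,N\}.$$ Let $\mathcal{F}_p^{\lambda,\gamma}(r)=\{F_\lambda(x):x\in B_p^\gamma(r)\}$ and $\mathcal{F}_p^{\lambda,\gamma,\Delta}(r)=\{F_\lambda(x):x\in B_p^{\gamma,\Delta}(r)\}$. Then $$h_q\big(\mathcal{F}_p^{\lambda,\gamma}(r),\mathcal{F}_p^{\lambda,\gamma,\Delta}(r)\big)\le 2r[\mu(\Omega)]^{2/q}\omega_\lambda(\Delta).$$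
   Context: Let $k,m,n\ge 1$ be integers and let $\Omega\subset\mathbb{R}^k$ be a compact set. Let $\mu$ denote Lebesgue measure. Let $p>1$, let $q$ satisfy $1/p+1/q=1$, and let $r>0$. $\|\cdot\|$ denotes the Euclidean norm on vectors and the Euclidean (Frobenius) norm on $m\times n$ matrices. $L_p(\Omega;\mathbb{R}^n)$ is the space of Lebesgue measurable $x:\Omega\to\mathbb{R}^n$ with $\|x\|_p=(\int_\Omega\|x(s)\|^p\,ds)^{1/p}<\infty$, and $B_p(r)=\{x\in L_p(\Omega;\mathbb{R}^n):\|x\|_p\le r\}$. $K_\lambda:\Omega\times\Omega\to\mathbb{R}^{m\times n}$ is a continuous function. Set $F_\lambda(x)(\xi)=\int_\Omega K_\lambda(\xi,s)x(s)\,ds$. Set $\omega_\lambda(\Delta)=\max\{\|K_\lambda(\xi,s_2)-K_\lambda(\xi,s_1)\|:\xi,s_1,s_2\in\Omega,\ \|s_2-s_1\|\le\Delta\}$. A finite $\Delta$-partition of $\Omega$ is a finite family of pairwise disjoint Lebesgue measurable subsets of $\Omega$ with union $\Omega$, each of diameter at most $\Delta$. $h_q$ denotes the Hausdorff distance in $L_q(\Omega;\mathbb{R}^m)$. *)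

theory Defs
  imports "HOL-Analysis.Analysis"
begin

definition Lp_pow_integral :: "real \<Rightarrow> 'a::euclidean_space set \<Rightarrow> ('a \<Rightarrow> 'b::real_normed_vector) \<Rightarrow> ennreal" where
  "Lp_pow_integral p \<Omega> x = (\<integral>\<^sup>+ s. ennreal (indicator \<Omega> s * norm (x s) powr p) \<partial>lebesgue)"

definition in_Lp :: "real \<Rightarrow> 'a::euclidean_space set \<Rightarrow> ('a \<Rightarrow> 'b::euclidean_space) \<Rightarrow> bool" where
  "in_Lp p \<Omega> x \<longleftrightarrow> set_borel_measurable lebesgue \<Omega> x \<and> Lp_pow_integral p \<Omega> x < \<infinity>"

definition Lp_norm :: "real \<Rightarrow> 'a::euclidean_space set \<Rightarrow> ('a \<Rightarrow> 'b::real_normed_vector) \<Rightarrow> real" where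
  "Lp_norm p \<Omega> x = enn2real (Lp_pow_integral p \<Omega> x) powr (1 / p)"

definition Lp_ball :: "real \<Rightarrow> 'a::euclidean_space set \<Rightarrow> real \<Rightarrow> ('a \<Rightarrow> 'b::euclidean_space) set" where
  "Lp_ball p \<Omega> r = {x. in_Lp p \<Omega> x \<and> Lp_norm p \<Omega> x \<le> r}"

definition Lp_ball_bdd :: "real \<Rightarrow> 'a::euclidean_space set \<Rightarrow> real \<Rightarrow> real \<Rightarrow> ('a \<Rightarrow> 'b::euclidean_space) set" where
  "Lp_ball_bdd p \<Omega> r \<gamma> = {x \<in> Lp_ball p \<Omega> r. \<forall>\<xi>\<in>\<Omega>. norm (x \<xi>) \<le> \<gamma>}"

definition Lp_ball_bdd_pc :: "real \<Rightarrow> 'a::euclidean_space set \<Rightarrow> real \<Rightarrow> real \<Rightarrow> 'a set set \<Rightarrow> ('a \<Rightarrow> 'b::euclidean_space) set" where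
  "Lp_ball_bdd_pc p \<Omega> r \<gamma> P = {x \<in> Lp_ball_bdd p \<Omega> r \<gamma>. \<forall>A\<in>P. \<exists>c. \<forall>s\<in>A. x s = c}"

definition is_Delta_partition :: "'a::euclidean_space set \<Rightarrow> real \<Rightarrow> 'a set set \<Rightarrow> bool" where
  "is_Delta_partition \<Omega> \<Delta> P \<longleftrightarrow> finite P \<and> disjoint P \<and> \<Union>P = \<Omega> \<and>
     (\<forall>A\<in>P. A \<in> sets lebesgue \<and> diameter A \<le> \<Delta>)"

definition F_op :: "(real^'k \<Rightarrow> real^'k \<Rightarrow> real^'n^'m) \<Rightarrow> (real^'k) set \<Rightarrow> (real^'k \<Rightarrow> real^'n) \<Rightarrow> (real^'k \<Rightarrow> real^'m)" where
  "F_op K \<Omega> x = (\<lambda>\<xi>. LINT s:\<Omega>|lebesgue. K \<xi> s *v x s)"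

text \<open>Modulus of continuity omega(Delta) (Frobenius norm = norm on real^'n^'m).\<close>
definition mod_cont :: "(real^'k \<Rightarrow> real^'k \<Rightarrow> real^'n^'m) \<Rightarrow> (real^'k) set \<Rightarrow> real \<Rightarrow> real" where
  "mod_cont K \<Omega> \<Delta> = Sup {norm (K \<xi> s2 - K \<xi> s1) | \<xi> s1 s2. \<xi> \<in> \<Omega> \<and> s1 \<in> \<Omega> \<and> s2 \<in> \<Omega> \<and> norm (s2 - s1) \<le> \<Delta>}"

definition hausdist_Lq :: "real \<Rightarrow> 'a::euclidean_space set \<Rightarrow> ('a \<Rightarrow> 'b::real_normed_vector) set \<Rightarrow> ('a \<Rightarrow> 'b) set \<Rightarrow> ereal" where
  "hausdist_Lq q \<Omega> A B = max
     (SUP f\<in>A. INF g\<in>B. ereal (Lp_norm q \<Omega> (\<lambda>s. f s - g s)))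
     (SUP g\<in>B. INF f\<in>A. ereal (Lp_norm q \<Omega> (\<lambda>s. f s - g s)))"

end

theory Submission
  imports Defs
begin

lemma holder1:
  fixes f :: "'a::euclidean_space \<Rightarrow> real"
  assumes A: "A \<in> sets lebesgue" "emeasure lebesgue A < \<infinity>"
    and fm: "(\<lambda>s. indicator A s * f s) \<in> borel_measurable lebesgue"
    and f0: "\<And>s. f s \<ge> 0"
    and p: "p > 1" "1/p + 1/q = 1"
    and fin: "(\<integral>\<^sup>+ s. ennreal (indicator A s * f s powr p) \<partial>lebesgue) < \<infinity>"
  shows "(\<integral>\<^sup>+ s. ennreal (indicator A s * f s) \<partial>lebesgue)
      \<le> ennreal (measure lebesgue A powr (1/q) * enn2real (\<integral>\<^sup>+ s. ennreal (indicator A s * f s powr p) \<partial>lebesgue) powr (1/p))"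
proof -
  define m where "m = measure lebesgue A"
  define II where "II = (\<integral>\<^sup>+ s. ennreal (indicator A s * f s powr p) \<partial>lebesgue)"
  define I where "I = enn2real II"
  have q: "q > 1" using p
    by (smt (verit) divide_less_eq_1_pos divide_pos_pos zero_less_divide_1_iff)
  have eqp: "indicator A s * f s powr p = (indicator A s * f s) powr p" for s
    using p by (auto simp: indicator_def)
  have fpm: "(\<lambda>s. indicator A s * f s powr p) \<in> borel_measurable lebesgue"
    unfolding eqp using fm by measurable
  have II: "II = ennreal I" unfolding I_def using fin II_def
    by (simp add: less_top)
  have I0: "I \<ge> 0" by (simp add: I_def)
  have emA: "emeasure lebesgue A = ennreal m"
    using A by (simp add: m_def emeasure_eq_ennreal_measure less_top)
  have m0: "m \<ge> 0" by (simp add: m_def)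
  show ?thesis
  proof (cases "m = 0 \<or> I = 0")
    case True
    have "AE s in lebesgue. indicator A s * f s = 0"
    proof (cases "m = 0")
      case True
      then have "A \<in> null_sets lebesgue" using A emA by (simp add: null_sets_def)
      from AE_not_in[OF this] show ?thesis by eventually_elim simp
    next
      case False
      then have "I = 0" using True by simp
      then have "II = 0" using II by simp
      then have "AE s in lebesgue. ennreal (indicator A s * f s powr p) = 0"
        using nn_integral_0_iff_AE[of "\<lambda>s. ennreal (indicator A s * f s powr p)" lebesgue] fpm
        unfolding II_def by simp
      then show ?thesis
      proof eventually_elim
        case (elim s)
        then have "indicator A s * f s powr p \<le> 0" by (metis ennreal_eq_0_iff)
        then show ?case using f0[of s] p
          by (cases "s \<in> A") (auto simp: indicator_def dest: order_antisym[OF _ powr_ge_zero])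
      qed
    qed
    then have ae: "AE s in lebesgue. ennreal (indicator A s * f s) = 0"
      by (auto elim: eventually_mono)
    have "(\<integral>\<^sup>+ s. ennreal (indicator A s * f s) \<partial>lebesgue) = 0"
      using nn_integral_cong_AE[OF ae] by simp
    then show ?thesis by simp
  next
    case False
    then have mp: "m > 0" and Ip: "I > 0" using m0 I0 by auto
    define N where "N = I powr (1/p)"
    define Mq where "Mq = m powr (1/q)"
    have Np: "N > 0" and Mp: "Mq > 0" using mp Ip by (auto simp: N_def Mq_def)
    have NI: "N powr p = I" using Ip p by (simp add: N_def powr_powr)
    have Mm: "Mq powr q = m" using mp q by (simp add: Mq_def powr_powr)
    define \<alpha> where "\<alpha> = N * Mq / (p * I)"
    define \<beta> where "\<beta> = N * Mq / (q * m)"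
    have pt: "indicator A s * f s \<le> \<alpha> * (indicator A s * f s powr p) + \<beta> * indicator A s" for s
    proof (cases "s \<in> A")
      case True
      have "(f s / N) * (1 / Mq) \<le> (f s / N) powr p / p + (1/Mq) powr q / q"
        by (rule Youngs_inequality) (use p q f0 Np Mp in auto)
      also have "(f s / N) powr p = f s powr p / I"
        using f0[of s] Np NI by (simp add: powr_divide)
      also have "(1/Mq) powr q = 1 / m"
        using Mp Mm by (simp add: powr_divide)
      finally have "(f s / N) * (1 / Mq) \<le> f s powr p / I / p + 1 / m / q" .
      then have "N * Mq * ((f s / N) * (1 / Mq)) \<le> N * Mq * (f s powr p / I / p + 1 / m / q)"
        using Np Mp by (intro mult_left_mono) auto
      moreover have "N * Mq * ((f s / N) * (1 / Mq)) = f s" using Np Mp by simp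
      moreover have "N * Mq * (f s powr p / I / p + 1 / m / q) = \<alpha> * f s powr p + \<beta>"
        using Np Mp Ip mp p q by (simp add: \<alpha>_def \<beta>_def divide_simps) (simp add: algebra_simps)
      ultimately show ?thesis using True by (simp add: indicator_def)
    next
      case False then show ?thesis by simp
    qed
    have "(\<integral>\<^sup>+ s. ennreal (indicator A s * f s) \<partial>lebesgue)
        \<le> (\<integral>\<^sup>+ s. ennreal \<alpha> * ennreal (indicator A s * f s powr p) + ennreal \<beta> * indicator A s \<partial>lebesgue)"
    proof (rule nn_integral_mono)
      fix s
      have a0: "\<alpha> \<ge> 0" "\<beta> \<ge> 0" using Np Mp Ip mp p q by (auto simp: \<alpha>_def \<beta>_def)
      have "ennreal (indicator A s * f s) \<le> ennreal (\<alpha> * (indicator A s * f s powr p) + \<beta> * indicator A s)"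
        using pt by (rule ennreal_leI)
      also have "\<dots> = ennreal \<alpha> * ennreal (indicator A s * f s powr p) + ennreal \<beta> * indicator A s"
        using a0 by (simp add: ennreal_plus[symmetric] ennreal_mult indicator_def)
      finally show "ennreal (indicator A s * f s) \<le> \<dots>" .
    qed
    also have "\<dots> = ennreal \<alpha> * II + ennreal \<beta> * emeasure lebesgue A"
      using fpm A unfolding II_def
      by (subst nn_integral_add) (auto simp: nn_integral_cmult nn_integral_cmult_indicator)
    also have "\<dots> = ennreal \<alpha> * ennreal I + ennreal \<beta> * ennreal m"
      by (simp only: II emA)
    also have "\<dots> = ennreal (\<alpha> * I + \<beta> * m)"
    proof -
      have a0: "\<alpha> \<ge> 0" "\<beta> \<ge> 0" using Np Mp Ip mp p q by (auto simp: \<alpha>_def \<beta>_def)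
      then show ?thesis using I0 m0 by (simp add: ennreal_plus ennreal_mult)
    qed
    also have "\<alpha> * I + \<beta> * m = N * Mq"
      using Ip mp p q by (simp add: \<alpha>_def \<beta>_def field_simps)
    also have "N * Mq = m powr (1/q) * I powr (1/p)" by (simp add: N_def Mq_def)
    finally show ?thesis unfolding I_def II_def m_def .
  qed
qed

lemma norm_mv_le: fixes A :: "real^'n^'m" shows "norm (A *v x) \<le> norm A * norm x"
proof -
  have e: "(A *v x) $ i = inner (A $ i) x" for i
    by (simp add: matrix_vector_mult_def inner_vec_def mult.commute)
  have "(norm (A *v x))^2 = (\<Sum>i\<in>UNIV. (inner (A$i) x)^2)"
    by (simp add: norm_vec_def L2_set_def e real_norm_def sum_nonneg)
  also have "\<dots> \<le> (\<Sum>i\<in>UNIV. (norm (A$i))^2 * (norm x)^2)"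
    apply (rule sum_mono)
    by (metis Cauchy_Schwarz_ineq2 power_mono abs_ge_zero power2_abs power_mult_distrib)
  also have "\<dots> = (norm A * norm x)^2"
    by (simp add: norm_vec_def L2_set_def power_mult_distrib sum_distrib_right sum_nonneg)
  finally show ?thesis
    by (meson mult_nonneg_nonneg norm_ge_zero power2_le_imp_le)
qed

lemma bb_mv: "bounded_bilinear (\<lambda>(A::real^'n^'m) x. A *v x)"
proof (rule bounded_bilinear.intro)
  show "\<exists>K. \<forall>(a::real^'n^'m) b. norm (a *v b) \<le> norm a * norm b * K"
    by (rule exI[of _ 1]) (simp add: norm_mv_le)
qed (auto simp: matrix_vector_mult_add_rdistrib matrix_vector_right_distrib scaleR_matrix_vector_assoc
      matrix_vector_mult_scaleR)

lemma meas_mv: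
  fixes Kx :: "'a \<Rightarrow> real^'n^'m" and h :: "'a \<Rightarrow> real^'n"
  assumes "(\<lambda>s. indicator \<Omega> s *\<^sub>R Kx s) \<in> borel_measurable M"
    "(\<lambda>s. indicator \<Omega> s *\<^sub>R h s) \<in> borel_measurable M"
  shows "(\<lambda>s. indicator \<Omega> s *\<^sub>R (Kx s *v h s)) \<in> borel_measurable M"
proof -
  have eq: "(\<lambda>s. indicator \<Omega> s *\<^sub>R (Kx s *v h s)) = (\<lambda>s. (indicator \<Omega> s *\<^sub>R Kx s) *v (indicator \<Omega> s *\<^sub>R h s))"
    by (auto simp: indicator_def)
  have c: "continuous_on UNIV (\<lambda>z::(real^'n^'m) \<times> (real^'n). fst z *v snd z)"
    by (rule bounded_bilinear.continuous_on[OF bb_mv]) (auto intro: continuous_intros)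
  show ?thesis unfolding eq
    by (rule borel_measurable_continuous_Pair[OF assms c])
qed

lemma part_sum:
  fixes g :: "'a set \<Rightarrow> 'b::real_vector"
  assumes "finite P" "disjoint P" "A0 \<in> P" "s \<in> A0"
  shows "(\<Sum>A\<in>P. indicator A s *\<^sub>R g A) = g A0"
proof -
  have "(\<Sum>A\<in>P. indicator A s *\<^sub>R g A) = (\<Sum>A\<in>P. if A = A0 then g A0 else 0)"
  proof (rule sum.cong)
    fix A assume "A \<in> P"
    show "indicator A s *\<^sub>R g A = (if A = A0 then g A0 else 0)"
    proof (cases "A = A0")
      case False
      then have "A \<inter> A0 = {}" using assms \<open>A \<in> P\<close> by (meson disjointD)
      then show ?thesis using assms False by (auto simp: indicator_def)
    qed (use assms in auto)
  qed simp
  also have "\<dots> = g A0" using assms by simp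
  finally show ?thesis .
qed

lemma part_sum0:
  fixes g :: "'a set \<Rightarrow> 'b::real_vector"
  assumes "s \<notin> \<Union>P"
  shows "(\<Sum>A\<in>P. indicator A s *\<^sub>R g A) = 0"
  using assms by (intro sum.neutral) (auto simp: indicator_def)

lemma part_ind:
  assumes "finite P" "disjoint P" "\<Union>P = \<Omega>"
  shows "indicator \<Omega> s = (\<Sum>A\<in>P. indicator A s :: real)"
proof (cases "s \<in> \<Omega>")
  case True
  then obtain A0 where "A0 \<in> P" "s \<in> A0" using assms by auto
  from part_sum[OF assms(1,2) this, of "\<lambda>_. 1::real"] True show ?thesis by simp
next
  case False
  from part_sum0[of s P "\<lambda>_. 1::real"] False assms show ?thesis by simp
qed

lemma holder1_real:
  fixes f :: "'a::euclidean_space \<Rightarrow> real"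
  assumes A: "A \<in> sets lebesgue" "emeasure lebesgue A < \<infinity>"
    and fm: "(\<lambda>s. indicator A s * f s) \<in> borel_measurable lebesgue"
    and f0: "\<And>s. f s \<ge> 0"
    and p: "p > 1" "1/p + 1/q = 1"
    and fin: "(\<integral>\<^sup>+ s. ennreal (indicator A s * f s powr p) \<partial>lebesgue) < \<infinity>"
  shows "(\<integral> s. indicator A s * f s \<partial>lebesgue)
      \<le> measure lebesgue A powr (1/q) * enn2real (\<integral>\<^sup>+ s. ennreal (indicator A s * f s powr p) \<partial>lebesgue) powr (1/p)"
proof -
  have "(\<integral> s. indicator A s * f s \<partial>lebesgue) = enn2real (\<integral>\<^sup>+ s. ennreal (indicator A s * f s) \<partial>lebesgue)"
    by (rule integral_eq_nn_integral[OF fm]) (use f0 in auto)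
  also have "\<dots> \<le> measure lebesgue A powr (1/q) * enn2real (\<integral>\<^sup>+ s. ennreal (indicator A s * f s powr p) \<partial>lebesgue) powr (1/p)"
    using holder1[OF assms] by (intro enn2real_leI) auto
  finally show ?thesis .
qed

lemma Lp_norm_const_bound:
  assumes "\<Omega> \<in> sets lebesgue" "emeasure lebesgue \<Omega> < \<infinity>" "q > 0" "C \<ge> 0"
    "\<And>\<xi>. \<xi> \<in> \<Omega> \<Longrightarrow> norm (g \<xi>) \<le> C"
  shows "Lp_norm q \<Omega> g \<le> C * measure lebesgue \<Omega> powr (1/q)"
proof -
  have "Lp_pow_integral q \<Omega> g \<le> (\<integral>\<^sup>+ s. ennreal (C powr q) * indicator \<Omega> s \<partial>lebesgue)"
    unfolding Lp_pow_integral_def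
  proof (rule nn_integral_mono)
    fix s show "ennreal (indicator \<Omega> s * norm (g s) powr q) \<le> ennreal (C powr q) * indicator \<Omega> s"
      using assms(5)[of s] assms(3,4) by (auto simp: indicator_def intro!: ennreal_leI powr_mono2)
  qed
  also have "\<dots> = ennreal (C powr q * measure lebesgue \<Omega>)"
    using assms by (simp add: nn_integral_cmult_indicator emeasure_eq_ennreal_measure less_top ennreal_mult)
  finally have "enn2real (Lp_pow_integral q \<Omega> g) \<le> C powr q * measure lebesgue \<Omega>"
    by (rule enn2real_leI[rotated]) simp
  then have "Lp_norm q \<Omega> g \<le> (C powr q * measure lebesgue \<Omega>) powr (1/q)"
    unfolding Lp_norm_def using assms by (intro powr_mono2) auto
  also have "\<dots> = C * measure lebesgue \<Omega> powr (1/q)"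
    using assms by (simp add: powr_mult powr_powr)
  finally show ?thesis .
qed

lemma int_bdd:
  fixes h :: "'a::euclidean_space \<Rightarrow> 'b::euclidean_space"
  assumes "A \<in> sets lebesgue" "A \<subseteq> \<Omega>" "emeasure lebesgue A < \<infinity>"
    "(\<lambda>s. indicator \<Omega> s *\<^sub>R h s) \<in> borel_measurable lebesgue"
    "\<And>s. s \<in> A \<Longrightarrow> norm (h s) \<le> B"
  shows "integrable lebesgue (\<lambda>s. indicator A s *\<^sub>R h s)"
proof -
  have "integrable lebesgue (\<lambda>s. indicator A s *\<^sub>R (indicator \<Omega> s *\<^sub>R h s))"
  proof (rule integrableI_bounded_set_indicator[where B=B])
    show "AE x in lebesgue. x \<in> A \<longrightarrow> norm (indicator \<Omega> x *\<^sub>R h x) \<le> B"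
    proof (rule AE_I2, rule impI)
      fix x assume "x \<in> A"
      then show "norm (indicator \<Omega> x *\<^sub>R h x) \<le> B" using assms(2) assms(5)[of x] by auto
    qed
  qed (use assms in auto)
  moreover have "(\<lambda>s. indicator A s *\<^sub>R (indicator \<Omega> s *\<^sub>R h s)) = (\<lambda>s. indicator A s *\<^sub>R h s)"
    using assms(2) by (intro ext) (auto simp: indicator_def)
  ultimately show ?thesis by simp
qed

lemma restr_meas:
  fixes h :: "'a::euclidean_space \<Rightarrow> 'b::euclidean_space"
  assumes "A \<in> sets lebesgue" "A \<subseteq> \<Omega>"
    "(\<lambda>s. indicator \<Omega> s *\<^sub>R h s) \<in> borel_measurable lebesgue"
  shows "(\<lambda>s. indicator A s *\<^sub>R h s) \<in> borel_measurable lebesgue"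
proof -
  have "(\<lambda>s. indicator A s *\<^sub>R (indicator \<Omega> s *\<^sub>R h s)) \<in> borel_measurable lebesgue"
    using assms by measurable
  moreover have "(\<lambda>s. indicator A s *\<^sub>R (indicator \<Omega> s *\<^sub>R h s)) = (\<lambda>s. indicator A s *\<^sub>R h s)"
    using assms(2) by (intro ext) (auto simp: indicator_def)
  ultimately show ?thesis by simp
qed


lemma core:
  fixes \<Omega> :: "(real^'k) set" and Kl :: "real^'k \<Rightarrow> real^'k \<Rightarrow> real^'n^'m"
    and x :: "real^'k \<Rightarrow> real^'n"
  assumes cpt: "compact \<Omega>" and ne: "\<Omega> \<noteq> {}"
    and p: "p > 1" "1/p + 1/q = 1" and r: "r > 0" and \<gamma>: "\<gamma> > 0" and \<Delta>: "\<Delta> > 0"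
    and cont: "continuous_on (\<Omega> \<times> \<Omega>) (\<lambda>(\<xi>, s). Kl \<xi> s)"
    and part: "is_Delta_partition \<Omega> \<Delta> P"
    and xB: "x \<in> Lp_ball_bdd p \<Omega> r \<gamma>"
  shows "\<exists>y \<in> Lp_ball_bdd_pc p \<Omega> r \<gamma> P. Lp_norm q \<Omega> (\<lambda>\<xi>. F_op Kl \<Omega> x \<xi> - F_op Kl \<Omega> y \<xi>)
           \<le> 2 * r * measure lebesgue \<Omega> powr (2/q) * mod_cont Kl \<Omega> \<Delta>"
proof -
  have q: "q > 1" using p
    by (smt (verit) divide_less_eq_1_pos divide_pos_pos zero_less_divide_1_iff)
  have \<Omega>L: "\<Omega> \<in> sets lebesgue" and \<Omega>fin: "emeasure lebesgue \<Omega> < \<infinity>"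
    using lmeasurable_compact[OF cpt] by (auto simp: fmeasurable_def)
  have Pfin: "finite P" and Pdisj: "disjoint P" and PU: "\<Union>P = \<Omega>"
    and PL: "\<And>A. A \<in> P \<Longrightarrow> A \<in> sets lebesgue" and Pdiam: "\<And>A. A \<in> P \<Longrightarrow> diameter A \<le> \<Delta>"
    using part by (auto simp: is_Delta_partition_def)
  have Psub: "\<And>A. A \<in> P \<Longrightarrow> A \<subseteq> \<Omega>" using PU by auto
  have Pfm: "\<And>A. A \<in> P \<Longrightarrow> emeasure lebesgue A < \<infinity>"
    using emeasure_mono[OF Psub \<Omega>L] \<Omega>fin by (meson le_less_trans)
  have bd\<Omega>: "bounded \<Omega>" using cpt by (rule compact_imp_bounded)
  have Pdist: "\<And>A s t. A \<in> P \<Longrightarrow> s \<in> A \<Longrightarrow> t \<in> A \<Longrightarrow> norm (s - t) \<le> \<Delta>"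
  proof -
    fix A s t assume "A \<in> P" "s \<in> A" "t \<in> A"
    then have "dist s t \<le> diameter A"
      using diameter_bounded_bound[OF bounded_subset[OF bd\<Omega> Psub]] by blast
    then show "norm (s - t) \<le> \<Delta>" using Pdiam[OF \<open>A \<in> P\<close>] by (simp add: dist_norm)
  qed
  have xm: "(\<lambda>s. indicator \<Omega> s *\<^sub>R x s) \<in> borel_measurable lebesgue"
    and xb: "\<And>s. s \<in> \<Omega> \<Longrightarrow> norm (x s) \<le> \<gamma>"
    and xfin: "Lp_pow_integral p \<Omega> x < \<infinity>" and xr: "Lp_norm p \<Omega> x \<le> r"
    using xB by (auto simp: Lp_ball_bdd_def Lp_ball_def in_Lp_def set_borel_measurable_def)
  obtain B where B: "\<And>\<xi> s. \<xi> \<in> \<Omega> \<Longrightarrow> s \<in> \<Omega> \<Longrightarrow> norm (Kl \<xi> s) \<le> B"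
  proof -
    have "compact ((\<lambda>(\<xi>, s). Kl \<xi> s) ` (\<Omega> \<times> \<Omega>))"
      by (rule compact_continuous_image[OF cont compact_Times[OF cpt cpt]])
    then obtain a where "\<forall>z\<in>(\<lambda>(\<xi>, s). Kl \<xi> s) ` (\<Omega> \<times> \<Omega>). norm z \<le> a"
      using compact_imp_bounded bounded_iff by metis
    then show ?thesis using that by fastforce
  qed
  define \<omega> where "\<omega> = mod_cont Kl \<Omega> \<Delta>"
  have \<omega>b: "\<And>\<xi> s1 s2. \<xi> \<in> \<Omega> \<Longrightarrow> s1 \<in> \<Omega> \<Longrightarrow> s2 \<in> \<Omega> \<Longrightarrow> norm (s2 - s1) \<le> \<Delta> \<Longrightarrow>
      norm (Kl \<xi> s2 - Kl \<xi> s1) \<le> \<omega>"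
    unfolding \<omega>_def mod_cont_def
  proof (rule cSup_upper)
    show "bdd_above {norm (Kl \<xi> s2 - Kl \<xi> s1) |\<xi> s1 s2. \<xi> \<in> \<Omega> \<and> s1 \<in> \<Omega> \<and> s2 \<in> \<Omega> \<and> norm (s2 - s1) \<le> \<Delta>}"
    proof (rule bdd_aboveI[where M="2*B"], clarify)
      fix \<xi> s1 s2 assume "\<xi> \<in> \<Omega>" "s1 \<in> \<Omega>" "s2 \<in> \<Omega>"
      then show "norm (Kl \<xi> s2 - Kl \<xi> s1) \<le> 2 * B"
        using B[of \<xi> s1] B[of \<xi> s2] norm_triangle_ineq4[of "Kl \<xi> s2" "Kl \<xi> s1"] by linarith
    qed
  qed blast
  have \<omega>0: "\<omega> \<ge> 0"
  proof -
    obtain \<xi> where "\<xi> \<in> \<Omega>" using ne by blast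
    then show ?thesis using \<omega>b[of \<xi> \<xi> \<xi>] \<Delta> by simp
  qed
  have Km: "\<And>\<xi>. \<xi> \<in> \<Omega> \<Longrightarrow> (\<lambda>s. indicator \<Omega> s *\<^sub>R Kl \<xi> s) \<in> borel_measurable lebesgue"
  proof -
    fix \<xi> assume "\<xi> \<in> \<Omega>"
    have "continuous_on \<Omega> (\<lambda>s. (\<lambda>(\<xi>, s). Kl \<xi> s) (\<xi>, s))"
      by (rule continuous_on_compose2[OF cont]) (use \<open>\<xi> \<in> \<Omega>\<close> in \<open>auto intro!: continuous_intros\<close>)
    then have "continuous_on \<Omega> (Kl \<xi>)" by simp
    then have "(\<lambda>s. indicator \<Omega> s *\<^sub>R Kl \<xi> s) \<in> borel_measurable borel"
      by (intro borel_measurable_continuous_on_indicator) (simp_all add: compact_imp_closed[OF cpt] borel_closed)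
    then show "(\<lambda>s. indicator \<Omega> s *\<^sub>R Kl \<xi> s) \<in> borel_measurable lebesgue"
      by (intro measurable_completion) simp
  qed
  have xcm: "\<And>v. (\<lambda>s. indicator \<Omega> s *\<^sub>R (x s - v)) \<in> borel_measurable lebesgue"
  proof -
    fix v
    have "(\<lambda>s. indicator \<Omega> s *\<^sub>R x s - indicator \<Omega> s *\<^sub>R v) \<in> borel_measurable lebesgue"
      using xm \<Omega>L by measurable
    then show "(\<lambda>s. indicator \<Omega> s *\<^sub>R (x s - v)) \<in> borel_measurable lebesgue"
      by (simp add: scaleR_right_diff_distrib)
  qed
  define c where "c A = (if measure lebesgue A = 0 then 0 else (1 / measure lebesgue A) *\<^sub>R (\<integral> s. indicator A s *\<^sub>R x s \<partial>lebesgue))" for A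
  define y where "y s = (\<Sum>A\<in>P. indicator A s *\<^sub>R c A)" for s
  have yA: "\<And>A s. A \<in> P \<Longrightarrow> s \<in> A \<Longrightarrow> y s = c A"
    unfolding y_def by (rule part_sum[OF Pfin Pdisj])
  have yout: "\<And>s. s \<notin> \<Omega> \<Longrightarrow> y s = 0"
    unfolding y_def using PU by (intro part_sum0) auto
  have xAint: "\<And>A. A \<in> P \<Longrightarrow> integrable lebesgue (\<lambda>s. indicator A s *\<^sub>R x s)"
    using int_bdd[OF PL Psub Pfm xm] xb Psub by blast
  have nxAint: "\<And>A. A \<in> P \<Longrightarrow> integrable lebesgue (\<lambda>s. indicator A s * norm (x s))"
  proof -
    fix A assume "A \<in> P"
    from integrable_norm[OF xAint[OF this]] show "integrable lebesgue (\<lambda>s. indicator A s * norm (x s))"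
      by simp
  qed
  define J where "J A = (\<integral> s. indicator A s * norm (x s) \<partial>lebesgue)" for A
  have J0: "\<And>A. J A \<ge> 0" unfolding J_def by (rule integral_nonneg_AE) auto
  have cb: "\<And>A. A \<in> P \<Longrightarrow> measure lebesgue A * norm (c A) \<le> J A"
  proof -
    fix A assume A: "A \<in> P"
    show "measure lebesgue A * norm (c A) \<le> J A"
    proof (cases "measure lebesgue A = 0")
      case True then show ?thesis using J0 by simp
    next
      case False
      have "norm (\<integral> s. indicator A s *\<^sub>R x s \<partial>lebesgue) \<le> (\<integral> s. norm (indicator A s *\<^sub>R x s) \<partial>lebesgue)"
        by (rule integral_norm_bound)
      also have "\<dots> = J A" unfolding J_def by simp
      finally have "norm (\<integral> s. indicator A s *\<^sub>R x s \<partial>lebesgue) \<le> J A" .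
      moreover have "measure lebesgue A * norm (c A) = norm (\<integral> s. indicator A s *\<^sub>R x s \<partial>lebesgue)"
        using False by (simp add: c_def)
      ultimately show ?thesis by simp
    qed
  qed
  have JAb: "\<And>A. A \<in> P \<Longrightarrow> J A \<le> \<gamma> * measure lebesgue A"
  proof -
    fix A assume A: "A \<in> P"
    have "J A \<le> (\<integral> s. indicator A s * \<gamma> \<partial>lebesgue)"
      unfolding J_def
    proof (rule integral_mono[OF nxAint[OF A]])
      show "integrable lebesgue (\<lambda>s. indicator A s * \<gamma>)" using PL[OF A] Pfm[OF A] by simp
      fix s show "indicator A s * norm (x s) \<le> indicator A s * \<gamma>"
        using xb[of s] Psub[OF A] by (auto simp: indicator_def)
    qed
    also have "\<dots> = \<gamma> * measure lebesgue A" by simp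
    finally show "J A \<le> \<gamma> * measure lebesgue A" .
  qed
  have c\<gamma>: "\<And>A. A \<in> P \<Longrightarrow> norm (c A) \<le> \<gamma>"
  proof -
    fix A assume A: "A \<in> P"
    show "norm (c A) \<le> \<gamma>"
    proof (cases "measure lebesgue A = 0")
      case True then show ?thesis using \<gamma> by (simp add: c_def)
    next
      case False
      then have mp: "measure lebesgue A > 0" using measure_nonneg[of lebesgue A] by linarith
      have "measure lebesgue A * norm (c A) \<le> measure lebesgue A * \<gamma>"
        using cb[OF A] JAb[OF A] by (simp add: mult.commute)
      then show ?thesis using mp by simp
    qed
  qed
  have yb: "\<And>s. s \<in> \<Omega> \<Longrightarrow> norm (y s) \<le> \<gamma>"
  proof -
    fix s assume "s \<in> \<Omega>"
    then obtain A where "A \<in> P" "s \<in> A" using PU by blast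
    then show "norm (y s) \<le> \<gamma>" using yA c\<gamma> by simp
  qed
  have yme: "y \<in> borel_measurable lebesgue"
    unfolding y_def using PL by (intro borel_measurable_sum borel_measurable_scaleR borel_measurable_indicator) auto
  have ym: "(\<lambda>s. indicator \<Omega> s *\<^sub>R y s) \<in> borel_measurable lebesgue"
  proof -
    have "(\<lambda>s. indicator \<Omega> s *\<^sub>R y s) = y" using yout by (intro ext) (auto simp: indicator_def)
    then show ?thesis using yme by simp
  qed
  have nxm: "\<And>A. A \<in> P \<or> A = \<Omega> \<Longrightarrow> (\<lambda>s. indicator A s * norm (x s)) \<in> borel_measurable lebesgue"
  proof -
    fix A assume A: "A \<in> P \<or> A = \<Omega>"
    have "(\<lambda>s. indicator A s *\<^sub>R x s) \<in> borel_measurable lebesgue"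
      using A restr_meas[OF PL Psub xm] xm by blast
    then have "(\<lambda>s. norm (indicator A s *\<^sub>R x s)) \<in> borel_measurable lebesgue" by measurable
    then show "(\<lambda>s. indicator A s * norm (x s)) \<in> borel_measurable lebesgue"
      by simp
  qed
  have pq: "p / q = p - 1"
  proof -
    have "1/q = 1 - 1/p" using p by linarith
    then have "p * (1/q) = p * (1 - 1/p)" by simp
    also have "\<dots> = p - 1" using p by (simp add: right_diff_distrib)
    finally show ?thesis by simp
  qed
  have cellj: "\<And>A. A \<in> P \<Longrightarrow> ennreal (norm (c A) powr p) * emeasure lebesgue A
       \<le> (\<integral>\<^sup>+ s. ennreal (indicator A s * norm (x s) powr p) \<partial>lebesgue)"
  proof -
    fix A assume A: "A \<in> P"
    define IA where "IA = (\<integral>\<^sup>+ s. ennreal (indicator A s * norm (x s) powr p) \<partial>lebesgue)"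
    have "IA \<le> Lp_pow_integral p \<Omega> x"
      unfolding IA_def Lp_pow_integral_def
      by (rule nn_integral_mono) (use Psub[OF A] in \<open>auto simp: indicator_def intro!: ennreal_leI\<close>)
    then have IAfin: "IA < \<infinity>" using xfin by (meson le_less_trans)
    define m where "m = measure lebesgue A"
    have em: "emeasure lebesgue A = ennreal m"
      using Pfm[OF A] by (simp add: m_def emeasure_eq_ennreal_measure less_top)
    show "ennreal (norm (c A) powr p) * emeasure lebesgue A \<le> IA"
    proof (cases "m = 0")
      case True then show ?thesis by (simp add: c_def m_def)
    next
      case False
      then have mp: "m > 0" using measure_nonneg[of lebesgue A] m_def by linarith
      define I where "I = enn2real IA"
      have I0: "I \<ge> 0" by (simp add: I_def)
      have IAI: "IA = ennreal I" using IAfin by (simp add: I_def less_top)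
      have "J A \<le> m powr (1/q) * I powr (1/p)"
        unfolding J_def m_def I_def IA_def
        by (rule holder1_real[OF PL[OF A] Pfm[OF A] nxm _ p]) (use IAfin A in \<open>auto simp: IA_def\<close>)
      then have "m * norm (c A) \<le> m powr (1/q) * I powr (1/p)" using cb[OF A] unfolding m_def by linarith
      then have nc: "norm (c A) \<le> m powr (1/q) * I powr (1/p) / m" using mp by (simp add: field_simps)
      have "norm (c A) powr p \<le> (m powr (1/q) * I powr (1/p) / m) powr p"
        using nc p by (intro powr_mono2) auto
      also have "\<dots> = (m powr (1/q)) powr p * (I powr (1/p)) powr p / m powr p"
        using mp I0 by (simp add: powr_divide powr_mult)
      also have "\<dots> = m powr (p - 1) * I / m powr p"
        using mp I0 p pq by (simp add: powr_powr)
      also have "\<dots> = I / m"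
        using mp by (simp add: powr_diff)
      finally have "norm (c A) powr p * m \<le> I" using mp by (simp add: field_simps)
      then have "ennreal (norm (c A) powr p * m) \<le> ennreal I" by (rule ennreal_leI)
      then show ?thesis using em IAI mp by (simp add: ennreal_mult)
    qed
  qed
  have ypow: "Lp_pow_integral p \<Omega> y \<le> Lp_pow_integral p \<Omega> x"
  proof -
    have py: "ennreal (indicator \<Omega> s * norm (y s) powr p) = (\<Sum>A\<in>P. ennreal (indicator A s * norm (c A) powr p))" for s
    proof -
      have "indicator \<Omega> s * norm (y s) powr p = (\<Sum>A\<in>P. indicator A s * norm (c A) powr p)"
      proof (cases "s \<in> \<Omega>")
        case True
        then obtain A0 where A0: "A0 \<in> P" "s \<in> A0" using PU by blast
        show ?thesis using part_sum[OF Pfin Pdisj A0, of "\<lambda>A. norm (c A) powr p"] yA[OF A0] True by simp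
      next
        case False
        show ?thesis using part_sum0[of s P "\<lambda>A. norm (c A) powr p"] False PU by simp
      qed
      then show ?thesis by (simp add: sum_ennreal)
    qed
    have px: "ennreal (indicator \<Omega> s * norm (x s) powr p) = (\<Sum>A\<in>P. ennreal (indicator A s * norm (x s) powr p))" for s
    proof -
      have "indicator \<Omega> s * norm (x s) powr p = (\<Sum>A\<in>P. indicator A s * norm (x s) powr p)"
        by (simp add: part_ind[OF Pfin Pdisj PU, of s] sum_distrib_right)
      then show ?thesis by (simp add: sum_ennreal)
    qed
    have "Lp_pow_integral p \<Omega> y = (\<integral>\<^sup>+ s. (\<Sum>A\<in>P. ennreal (indicator A s * norm (c A) powr p)) \<partial>lebesgue)"
      unfolding Lp_pow_integral_def py ..
    also have "\<dots> = (\<Sum>A\<in>P. (\<integral>\<^sup>+ s. ennreal (indicator A s * norm (c A) powr p) \<partial>lebesgue))"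
    proof (rule nn_integral_sum)
      fix A assume A: "A \<in> P"
      have [measurable]: "A \<in> sets lebesgue" using PL[OF A] .
      show "(\<lambda>s. ennreal (indicator A s * norm (c A) powr p)) \<in> borel_measurable lebesgue" by measurable
    qed
    also have "\<dots> = (\<Sum>A\<in>P. ennreal (norm (c A) powr p) * emeasure lebesgue A)"
    proof (rule sum.cong[OF refl])
      fix A assume A: "A \<in> P"
      have "(\<lambda>s. ennreal (indicator A s * norm (c A) powr p)) = (\<lambda>s. ennreal (norm (c A) powr p) * indicator A s)"
        by (intro ext) (auto simp: indicator_def)
      then show "(\<integral>\<^sup>+ s. ennreal (indicator A s * norm (c A) powr p) \<partial>lebesgue) = ennreal (norm (c A) powr p) * emeasure lebesgue A"
        using PL[OF A] by (simp add: nn_integral_cmult_indicator)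
    qed
    also have "\<dots> \<le> (\<Sum>A\<in>P. (\<integral>\<^sup>+ s. ennreal (indicator A s * norm (x s) powr p) \<partial>lebesgue))"
      by (rule sum_mono) (rule cellj)
    also have "\<dots> = (\<integral>\<^sup>+ s. (\<Sum>A\<in>P. ennreal (indicator A s * norm (x s) powr p)) \<partial>lebesgue)"
    proof (rule nn_integral_sum[symmetric])
      fix A assume A: "A \<in> P"
      have e: "indicator A s * norm (x s) powr p = (indicator A s * norm (x s)) powr p" for s
        using p by (auto simp: indicator_def)
      have "(\<lambda>s. (indicator A s * norm (x s)) powr p) \<in> borel_measurable lebesgue"
        using nxm[of A] A by (intro powr_real_measurable) auto
      then show "(\<lambda>s. ennreal (indicator A s * norm (x s) powr p)) \<in> borel_measurable lebesgue"
        unfolding e by (rule measurable_compose[OF _ measurable_ennreal])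
    qed
    also have "\<dots> = Lp_pow_integral p \<Omega> x"
      unfolding Lp_pow_integral_def px ..
    finally show ?thesis .
  qed
  have yB: "y \<in> Lp_ball_bdd_pc p \<Omega> r \<gamma> P"
  proof -
    have yfin: "Lp_pow_integral p \<Omega> y < \<infinity>" using ypow xfin by (meson le_less_trans)
    have "enn2real (Lp_pow_integral p \<Omega> y) \<le> enn2real (Lp_pow_integral p \<Omega> x)"
      using ypow xfin by (intro enn2real_mono) auto
    then have "Lp_norm p \<Omega> y \<le> Lp_norm p \<Omega> x"
      unfolding Lp_norm_def using p by (intro powr_mono2) auto
    then have yr: "Lp_norm p \<Omega> y \<le> r" using xr by linarith
    have "\<forall>A\<in>P. \<exists>c. \<forall>s\<in>A. y s = c" using yA by blast
    then show ?thesis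
      using ym yfin yr yb
      by (auto simp: Lp_ball_bdd_pc_def Lp_ball_bdd_def Lp_ball_def in_Lp_def set_borel_measurable_def)
  qed
  have pw: "\<And>\<xi>. \<xi> \<in> \<Omega> \<Longrightarrow> norm (F_op Kl \<Omega> x \<xi> - F_op Kl \<Omega> y \<xi>) \<le> 2 * \<omega> * J \<Omega>"
  proof -
    fix \<xi> assume \<xi>: "\<xi> \<in> \<Omega>"
    have Kb: "\<And>s. s \<in> \<Omega> \<Longrightarrow> norm (Kl \<xi> s) \<le> B" using B \<xi> by blast
    have B0: "B \<ge> 0" using Kb[OF \<xi>] norm_ge_zero[of "Kl \<xi> \<xi>"] by linarith
    have intg: "\<And>A (h :: real^'k \<Rightarrow> real^'n) H. A \<in> P \<or> A = \<Omega> \<Longrightarrow> (\<lambda>s. indicator \<Omega> s *\<^sub>R h s) \<in> borel_measurable lebesgue \<Longrightarrow>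
        (\<And>s. s \<in> \<Omega> \<Longrightarrow> norm (h s) \<le> H) \<Longrightarrow> integrable lebesgue (\<lambda>s. indicator A s *\<^sub>R (Kl \<xi> s *v h s))"
    proof -
      fix A and h :: "real^'k \<Rightarrow> real^'n" and H assume A: "A \<in> P \<or> A = \<Omega>" and hm: "(\<lambda>s. indicator \<Omega> s *\<^sub>R h s) \<in> borel_measurable lebesgue"
        and hb: "\<And>s. s \<in> \<Omega> \<Longrightarrow> norm (h s) \<le> H"
      have AL: "A \<in> sets lebesgue" "A \<subseteq> \<Omega>" "emeasure lebesgue A < \<infinity>" using A PL Psub Pfm \<Omega>L \<Omega>fin by auto
      show "integrable lebesgue (\<lambda>s. indicator A s *\<^sub>R (Kl \<xi> s *v h s))"
      proof (rule int_bdd[OF AL meas_mv[OF Km[OF \<xi>] hm], where B="B * H"])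
        fix s assume "s \<in> A"
        then have s: "s \<in> \<Omega>" using AL by auto
        have "norm (Kl \<xi> s *v h s) \<le> norm (Kl \<xi> s) * norm (h s)" by (rule norm_mv_le)
        also have "\<dots> \<le> B * H" using Kb[OF s] hb[OF s] B0 by (intro mult_mono) auto
        finally show "norm (Kl \<xi> s *v h s) \<le> B * H" .
      qed
    qed
    have intx: "integrable lebesgue (\<lambda>s. indicator \<Omega> s *\<^sub>R (Kl \<xi> s *v x s))"
      using intg[OF _ xm xb] by blast
    have inty: "integrable lebesgue (\<lambda>s. indicator \<Omega> s *\<^sub>R (Kl \<xi> s *v y s))"
      using intg[OF _ ym yb] by blast
    have xcb: "\<And>A s. A \<in> P \<Longrightarrow> s \<in> \<Omega> \<Longrightarrow> norm (x s - c A) \<le> \<gamma> + \<gamma>"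
      using xb c\<gamma> norm_triangle_ineq4 by (meson add_mono order_trans)
    have intxc: "\<And>A. A \<in> P \<Longrightarrow> integrable lebesgue (\<lambda>s. indicator A s *\<^sub>R (Kl \<xi> s *v (x s - c A)))"
      using intg[OF _ xcm xcb] by blast
    define T where "T A = (\<integral> s. indicator A s *\<^sub>R (Kl \<xi> s *v (x s - c A)) \<partial>lebesgue)" for A
    have dec: "F_op Kl \<Omega> x \<xi> - F_op Kl \<Omega> y \<xi> = (\<Sum>A\<in>P. T A)"
    proof -
      have "F_op Kl \<Omega> x \<xi> - F_op Kl \<Omega> y \<xi> =
          (\<integral> s. indicator \<Omega> s *\<^sub>R (Kl \<xi> s *v x s) - indicator \<Omega> s *\<^sub>R (Kl \<xi> s *v y s) \<partial>lebesgue)"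
        unfolding F_op_def set_lebesgue_integral_def by (rule Bochner_Integration.integral_diff[OF intx inty, symmetric])
      also have "\<dots> = (\<integral> s. (\<Sum>A\<in>P. indicator A s *\<^sub>R (Kl \<xi> s *v (x s - c A))) \<partial>lebesgue)"
      proof (rule Bochner_Integration.integral_cong[OF refl])
        fix s
        show "indicator \<Omega> s *\<^sub>R (Kl \<xi> s *v x s) - indicator \<Omega> s *\<^sub>R (Kl \<xi> s *v y s) =
            (\<Sum>A\<in>P. indicator A s *\<^sub>R (Kl \<xi> s *v (x s - c A)))"
        proof (cases "s \<in> \<Omega>")
          case True
          then obtain A0 where A0: "A0 \<in> P" "s \<in> A0" using PU by blast
          show ?thesis using part_sum[OF Pfin Pdisj A0, of "\<lambda>A. Kl \<xi> s *v (x s - c A)"] yA[OF A0] True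
            by (simp add: matrix_vector_mult_diff_distrib)
        next
          case False
          show ?thesis using part_sum0[of s P "\<lambda>A. Kl \<xi> s *v (x s - c A)"] False PU by simp
        qed
      qed
      also have "\<dots> = (\<Sum>A\<in>P. T A)" unfolding T_def by (rule Bochner_Integration.integral_sum) (rule intxc)
      finally show ?thesis .
    qed
    have TA: "\<And>A. A \<in> P \<Longrightarrow> norm (T A) \<le> 2 * \<omega> * J A"
    proof -
      fix A assume A: "A \<in> P"
      show "norm (T A) \<le> 2 * \<omega> * J A"
      proof (cases "measure lebesgue A = 0")
        case True
        then have "A \<in> null_sets lebesgue" using PL[OF A] Pfm[OF A]
          by (simp add: null_sets_def emeasure_eq_ennreal_measure less_top)
        then have "T A = 0" unfolding T_def
          by (intro integral_eq_zero_AE) (auto elim: eventually_mono[OF AE_not_in])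
        then show ?thesis using \<omega>0 J0[of A] by simp
      next
        case False
        then obtain sA where sA: "sA \<in> A" by fastforce
        define Kc where "Kc = Kl \<xi> sA"
        have Kcm: "(\<lambda>s. indicator \<Omega> s *\<^sub>R Kc) \<in> borel_measurable lebesgue" using \<Omega>L by measurable
        have intKc: "integrable lebesgue (\<lambda>s. indicator A s *\<^sub>R (Kc *v (x s - c A)))"
        proof (rule int_bdd[OF PL[OF A] Psub[OF A] Pfm[OF A] meas_mv[OF Kcm xcm], where B="norm Kc * (\<gamma> + \<gamma>)"])
          fix s assume "s \<in> A"
          then have s: "s \<in> \<Omega>" using Psub[OF A] by auto
          have "norm (Kc *v (x s - c A)) \<le> norm Kc * norm (x s - c A)" by (rule norm_mv_le)
          also have "\<dots> \<le> norm Kc * (\<gamma> + \<gamma>)" using xcb[OF A s] by (intro mult_left_mono) auto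
          finally show "norm (Kc *v (x s - c A)) \<le> norm Kc * (\<gamma> + \<gamma>)" .
        qed
        have intxA: "integrable lebesgue (\<lambda>s. indicator A s *\<^sub>R x s - indicator A s *\<^sub>R c A)"
          by (rule Bochner_Integration.integrable_diff[OF xAint[OF A] integrable_scaleR_left]) (use PL[OF A] Pfm[OF A] in simp)
        have Z: "(\<integral> s. indicator A s *\<^sub>R (Kc *v (x s - c A)) \<partial>lebesgue) = 0"
        proof -
          have e: "(\<lambda>s. indicator A s *\<^sub>R (Kc *v (x s - c A))) = (\<lambda>s. Kc *v (indicator A s *\<^sub>R x s - indicator A s *\<^sub>R c A))"
            by (intro ext) (simp add: matrix_vector_mult_scaleR scaleR_right_diff_distrib matrix_vector_mult_diff_distrib)
          have bl: "bounded_linear (\<lambda>v. Kc *v v)"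
            by (simp add: linear_conv_bounded_linear)
          have "(\<integral> s. indicator A s *\<^sub>R x s - indicator A s *\<^sub>R c A \<partial>lebesgue) = 0"
          proof -
            have "(\<integral> s. indicator A s *\<^sub>R x s - indicator A s *\<^sub>R c A \<partial>lebesgue)
                = (\<integral> s. indicator A s *\<^sub>R x s \<partial>lebesgue) - measure lebesgue A *\<^sub>R c A"
              using xAint[OF A] PL[OF A] Pfm[OF A] by simp
            also have "\<dots> = 0" using False by (simp add: c_def)
            finally show ?thesis .
          qed
          then show ?thesis unfolding e integral_bounded_linear[OF bl intxA] by simp
        qed
        have "T A = T A - (\<integral> s. indicator A s *\<^sub>R (Kc *v (x s - c A)) \<partial>lebesgue)" using Z by simp
        also have "\<dots> = (\<integral> s. indicator A s *\<^sub>R (Kl \<xi> s *v (x s - c A)) - indicator A s *\<^sub>R (Kc *v (x s - c A)) \<partial>lebesgue)"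
          unfolding T_def by (rule Bochner_Integration.integral_diff[OF intxc[OF A] intKc, symmetric])
        also have "\<dots> = (\<integral> s. indicator A s *\<^sub>R ((Kl \<xi> s - Kc) *v (x s - c A)) \<partial>lebesgue)"
          by (simp add: matrix_vector_mult_diff_rdistrib scaleR_right_diff_distrib)
        finally have TAe: "T A = (\<integral> s. indicator A s *\<^sub>R ((Kl \<xi> s - Kc) *v (x s - c A)) \<partial>lebesgue)" .
        have intD: "integrable lebesgue (\<lambda>s. indicator A s *\<^sub>R ((Kl \<xi> s - Kc) *v (x s - c A)))"
        proof -
          have "integrable lebesgue (\<lambda>s. indicator A s *\<^sub>R (Kl \<xi> s *v (x s - c A)) - indicator A s *\<^sub>R (Kc *v (x s - c A)))"
            using intxc[OF A] intKc by (rule Bochner_Integration.integrable_diff)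
          then show ?thesis by (simp add: matrix_vector_mult_diff_rdistrib scaleR_right_diff_distrib)
        qed
        have gint: "integrable lebesgue (\<lambda>s. \<omega> * (indicator A s * norm (x s)) + (\<omega> * norm (c A)) * indicator A s)"
          by (rule Bochner_Integration.integrable_add[OF integrable_mult_right[OF nxAint[OF A]] integrable_mult_right])
            (use PL[OF A] Pfm[OF A] in simp)
        have "norm (T A) \<le> (\<integral> s. \<omega> * (indicator A s * norm (x s)) + (\<omega> * norm (c A)) * indicator A s \<partial>lebesgue)"
          unfolding TAe
        proof (rule Bochner_Integration.integral_norm_bound_integral[OF intD gint])
          fix s
          show "norm (indicator A s *\<^sub>R ((Kl \<xi> s - Kc) *v (x s - c A))) \<le> \<omega> * (indicator A s * norm (x s)) + (\<omega> * norm (c A)) * indicator A s"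
          proof (cases "s \<in> A")
            case True
            have s: "s \<in> \<Omega>" and sAO: "sA \<in> \<Omega>" using True sA Psub[OF A] by auto
            have "norm ((Kl \<xi> s - Kc) *v (x s - c A)) \<le> norm (Kl \<xi> s - Kc) * norm (x s - c A)" by (rule norm_mv_le)
            also have "\<dots> \<le> \<omega> * (norm (x s) + norm (c A))"
              using \<omega>b[OF \<xi> sAO s Pdist[OF A True sA]] norm_triangle_ineq4[of "x s" "c A"] \<omega>0
              unfolding Kc_def by (intro mult_mono) auto
            finally show ?thesis using True by (simp add: algebra_simps)
          qed simp
        qed
        also have "\<dots> = \<omega> * J A + \<omega> * norm (c A) * measure lebesgue A"
          using nxAint[OF A] PL[OF A] Pfm[OF A] unfolding J_def by simp
        also have "\<dots> \<le> \<omega> * J A + \<omega> * J A"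
          using cb[OF A] \<omega>0 by (simp add: mult.assoc mult.commute[of "norm (c A)"] mult_left_mono)
        finally show ?thesis by simp
      qed
    qed
    have JS: "J \<Omega> = (\<Sum>A\<in>P. J A)"
    proof -
      have "J \<Omega> = (\<integral> s. (\<Sum>A\<in>P. indicator A s * norm (x s)) \<partial>lebesgue)"
        unfolding J_def by (simp add: part_ind[OF Pfin Pdisj PU] sum_distrib_right)
      also have "\<dots> = (\<Sum>A\<in>P. J A)" unfolding J_def by (rule Bochner_Integration.integral_sum) (rule nxAint)
      finally show ?thesis .
    qed
    have "norm (F_op Kl \<Omega> x \<xi> - F_op Kl \<Omega> y \<xi>) \<le> (\<Sum>A\<in>P. norm (T A))"
      unfolding dec by (rule norm_sum)
    also have "\<dots> \<le> (\<Sum>A\<in>P. 2 * \<omega> * J A)" by (rule sum_mono) (rule TA)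
    also have "\<dots> = 2 * \<omega> * J \<Omega>" by (simp add: JS sum_distrib_left)
    finally show "norm (F_op Kl \<Omega> x \<xi> - F_op Kl \<Omega> y \<xi>) \<le> 2 * \<omega> * J \<Omega>" .
  qed
  have J\<Omega>: "J \<Omega> \<le> measure lebesgue \<Omega> powr (1/q) * r"
  proof -
    have "J \<Omega> \<le> measure lebesgue \<Omega> powr (1/q) * enn2real (Lp_pow_integral p \<Omega> x) powr (1/p)"
      unfolding J_def Lp_pow_integral_def
      by (rule holder1_real[OF \<Omega>L \<Omega>fin nxm _ p]) (use xfin in \<open>auto simp: Lp_pow_integral_def\<close>)
    also have "\<dots> = measure lebesgue \<Omega> powr (1/q) * Lp_norm p \<Omega> x" by (simp add: Lp_norm_def)
    also have "\<dots> \<le> measure lebesgue \<Omega> powr (1/q) * r" using xr by (intro mult_left_mono) auto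
    finally show ?thesis .
  qed
  have "Lp_norm q \<Omega> (\<lambda>\<xi>. F_op Kl \<Omega> x \<xi> - F_op Kl \<Omega> y \<xi>)
      \<le> (2 * \<omega> * (measure lebesgue \<Omega> powr (1/q) * r)) * measure lebesgue \<Omega> powr (1/q)"
  proof (rule Lp_norm_const_bound[OF \<Omega>L \<Omega>fin])
    fix \<xi> assume "\<xi> \<in> \<Omega>"
    have "2 * \<omega> * J \<Omega> \<le> 2 * \<omega> * (measure lebesgue \<Omega> powr (1/q) * r)"
      using J\<Omega> \<omega>0 by (intro mult_left_mono) auto
    then show "norm (F_op Kl \<Omega> x \<xi> - F_op Kl \<Omega> y \<xi>) \<le> 2 * \<omega> * (measure lebesgue \<Omega> powr (1/q) * r)"
      using pw[OF \<open>\<xi> \<in> \<Omega>\<close>] by linarith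
  qed (use q \<omega>0 r in auto)
  also have "\<dots> = 2 * r * measure lebesgue \<Omega> powr (2/q) * \<omega>"
  proof -
    have "measure lebesgue \<Omega> powr (1/q) * measure lebesgue \<Omega> powr (1/q) = measure lebesgue \<Omega> powr (2/q)"
      by (simp add: powr_add[symmetric])
    then show ?thesis by (simp add: algebra_simps)
  qed
  finally show ?thesis using yB unfolding \<omega>_def by blast
qed
lemma zero_in_pc: "r \<ge> 0 \<Longrightarrow> \<gamma> \<ge> 0 \<Longrightarrow> (\<lambda>_. 0) \<in> Lp_ball_bdd_pc p \<Omega> r \<gamma> P"
  by (simp add: Lp_ball_bdd_pc_def Lp_ball_bdd_def Lp_ball_def in_Lp_def Lp_norm_def Lp_pow_integral_def
      set_borel_measurable_def)

lemma pc_sub: "Lp_ball_bdd_pc p \<Omega> r \<gamma> P \<subseteq> Lp_ball_bdd p \<Omega> r \<gamma>"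
  by (auto simp: Lp_ball_bdd_pc_def)

lemma Lp_norm_nonneg: "Lp_norm q \<Omega> f \<ge> 0"
  by (simp add: Lp_norm_def)

theorem mainTheorem5:
  fixes \<Omega> :: "(real^'k) set"
    and K :: "real \<Rightarrow> real^'k \<Rightarrow> real^'k \<Rightarrow> real^'n^'m"
    and p q r lam \<gamma> \<Delta> :: real
    and P :: "(real^'k) set set"
  assumes "compact \<Omega>"
    and "p > 1" and "1/p + 1/q = 1" and "r > 0"
    and "lam > 0" and "\<gamma> > 0" and "\<Delta> > 0"
    and "continuous_on (\<Omega> \<times> \<Omega>) (\<lambda>(\<xi>, s). K lam \<xi> s)"
    and "is_Delta_partition \<Omega> \<Delta> P"
  shows "hausdist_Lq q \<Omega>
           (F_op (K lam) \<Omega> ` (Lp_ball_bdd p \<Omega> r \<gamma> :: (real^'k \<Rightarrow> real^'n) set))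
           (F_op (K lam) \<Omega> ` (Lp_ball_bdd_pc p \<Omega> r \<gamma> P :: (real^'k \<Rightarrow> real^'n) set))
         \<le> ereal (2 * r * (measure lebesgue \<Omega>) powr (2 / q) * mod_cont (K lam) \<Omega> \<Delta>)"
proof -
  define R where "R = 2 * r * (measure lebesgue \<Omega>) powr (2 / q) * mod_cont (K lam) \<Omega> \<Delta>"
  define B1 where "B1 = (Lp_ball_bdd p \<Omega> r \<gamma> :: (real^'k \<Rightarrow> real^'n) set)"
  define B2 where "B2 = (Lp_ball_bdd_pc p \<Omega> r \<gamma> P :: (real^'k \<Rightarrow> real^'n) set)"
  define F where "F = F_op (K lam) \<Omega>"
  have z2: "(\<lambda>_. 0) \<in> B2" unfolding B2_def using assms by (intro zero_in_pc) auto
  have sub: "B2 \<subseteq> B1" unfolding B1_def B2_def by (rule pc_sub)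
  have key: "\<And>x. x \<in> B1 \<Longrightarrow> \<exists>y\<in>B2. Lp_norm q \<Omega> (\<lambda>\<xi>. F x \<xi> - F y \<xi>) \<le> R"
  proof -
    fix x assume x: "x \<in> B1"
    show "\<exists>y\<in>B2. Lp_norm q \<Omega> (\<lambda>\<xi>. F x \<xi> - F y \<xi>) \<le> R"
    proof (cases "\<Omega> = {}")
      case True
      then show ?thesis using z2 by (auto simp: R_def Lp_norm_def Lp_pow_integral_def)
    next
      case False
      show ?thesis unfolding R_def F_def B2_def
        by (rule core[OF assms(1) False assms(2,3,4,6,7,8,9)]) (use x B1_def in simp)
    qed
  qed
  have R0: "R \<ge> 0"
    using key[OF subsetD[OF sub z2]] Lp_norm_nonneg order_trans by blast
  have t1: "(SUP f\<in>F ` B1. INF g\<in>F ` B2. ereal (Lp_norm q \<Omega> (\<lambda>s. f s - g s))) \<le> ereal R"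
  proof (rule SUP_least)
    fix f assume "f \<in> F ` B1"
    then obtain x where x: "x \<in> B1" "f = F x" by blast
    then obtain y where y: "y \<in> B2" "Lp_norm q \<Omega> (\<lambda>\<xi>. F x \<xi> - F y \<xi>) \<le> R" using key by blast
    show "(INF g\<in>F ` B2. ereal (Lp_norm q \<Omega> (\<lambda>s. f s - g s))) \<le> ereal R"
      by (rule INF_lower2[of "F y"]) (use x y in auto)
  qed
  have t2: "(SUP g\<in>F ` B2. INF f\<in>F ` B1. ereal (Lp_norm q \<Omega> (\<lambda>s. f s - g s))) \<le> ereal R"
  proof (rule SUP_least)
    fix g assume g: "g \<in> F ` B2"
    then have "g \<in> F ` B1" using sub by blast
    then show "(INF f\<in>F ` B1. ereal (Lp_norm q \<Omega> (\<lambda>s. f s - g s))) \<le> ereal R"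
      by (rule INF_lower2) (use R0 in \<open>simp add: Lp_norm_def Lp_pow_integral_def\<close>)
  qed
  show ?thesis using t1 t2 unfolding hausdist_Lq_def R_def B1_def B2_def F_def by simp
qed


end
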